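(* Let $m\geq 2$, $a\geq 1$ be integers and let $S_{ma}$ denote the symmetric group on $[m]\times[a]$, where $[n]=\{1,\dots,n\}$. Define embeddings $f:S_m\to S_{ma}$ by $f(\tau)(i,j)=(\tau(i),j)$ and $g:S_a\to S_{ma}$ by $g(\sigma)(i,j)=(i,\sigma(j))$. If $m=2$ define $h:(\mathbb{Z}/2\mathbb{Z})^a\to S_{2a}$ by $h(\epsilon_1,\dots,\epsilon_a)(i,j)=(i+\epsilon_j,j)$, where $i+\epsilon_j$ is taken in $\{1,2\}$ with $1+\bar0=1$, $1+\bar1=2$, $2+\bar0=2$, $2+\bar1=1$; if $m\geq 3$ set $h=f$. Then $$N_{S_{ma}}(\mathrm{im}(f))=\mathrm{im}(h)\cdot\mathrm{im}(g).$$
   Context: $N_G(H)$ denotes the normalizer of a subgroup $H$ in $G$. *)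

theory Defs
  imports "HOL-Algebra.Algebra"
begin

text \<open>The index set [m] x [a]; S_{ma} is BijGroup of this set.\<close>
definition grid :: "nat \<Rightarrow> nat \<Rightarrow> (nat \<times> nat) set" where
  "grid m a = {1..m} \<times> {1..a}"

definition embed_f :: "nat \<Rightarrow> nat \<Rightarrow> (nat \<Rightarrow> nat) \<Rightarrow> (nat \<times> nat \<Rightarrow> nat \<times> nat)" where
  "embed_f m a tau = (\<lambda>(i, j) \<in> grid m a. (tau i, j))"

definition embed_g :: "nat \<Rightarrow> nat \<Rightarrow> (nat \<Rightarrow> nat) \<Rightarrow> (nat \<times> nat \<Rightarrow> nat \<times> nat)" where
  "embed_g m a sigma = (\<lambda>(i, j) \<in> grid m a. (i, sigma j))"

text \<open>For m = 2: h(eps)(i,j) = (i + eps_j, j), with eps_j in Z/2Z represented by 0 or 1,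
  and i + 1 in {1,2} meaning the swap 1 <-> 2, i.e. 3 - i.\<close>
definition embed_h2 :: "nat \<Rightarrow> (nat \<Rightarrow> nat) \<Rightarrow> (nat \<times> nat \<Rightarrow> nat \<times> nat)" where
  "embed_h2 a eps = (\<lambda>(i, j) \<in> grid 2 a. (if eps j = 1 then 3 - i else i, j))"

definition im_f :: "nat \<Rightarrow> nat \<Rightarrow> (nat \<times> nat \<Rightarrow> nat \<times> nat) set" where
  "im_f m a = embed_f m a ` carrier (BijGroup {1..m})"

definition im_g :: "nat \<Rightarrow> nat \<Rightarrow> (nat \<times> nat \<Rightarrow> nat \<times> nat) set" where
  "im_g m a = embed_g m a ` carrier (BijGroup {1..a})"

text \<open>(Z/2Z)^a is represented by the functions {1..a} -> {0,1} (extensional).\<close>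
definition im_h :: "nat \<Rightarrow> nat \<Rightarrow> (nat \<times> nat \<Rightarrow> nat \<times> nat) set" where
  "im_h m a = (if m = 2 then embed_h2 a ` ({1..a} \<rightarrow>\<^sub>E {0, 1}) else im_f m a)"

end

theory Submission
  imports Defs
begin

lemma mult_Bij: "x \<in> Bij S \<Longrightarrow> y \<in> Bij S \<Longrightarrow> x \<otimes>\<^bsub>BijGroup S\<^esub> y = compose S x y"
  by (simp add: BijGroup_def)

lemma carrier_Bij: "carrier (BijGroup S) = Bij S"
  by (simp add: BijGroup_def)

lemma Bij_intro:
  assumes "finite S" "f \<in> extensional S" "\<And>x. x \<in> S \<Longrightarrow> f x \<in> S" "inj_on f S"
  shows "f \<in> Bij S"
proof -
  have "f ` S = S" using endo_inj_surj[of S f] assms by blast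
  thus ?thesis using assms by (simp add: Bij_def bij_betw_def)
qed

lemma finite_grid: "finite (grid m a)" by (simp add: grid_def)

lemma embed_f_Bij:
  assumes "\<tau> \<in> Bij {1..m}" shows "embed_f m a \<tau> \<in> Bij (grid m a)"
proof (rule Bij_intro[OF finite_grid])
  have b: "bij_betw \<tau> {1..m} {1..m}" using assms by (simp add: Bij_def)
  show "embed_f m a \<tau> \<in> extensional (grid m a)" by (simp add: embed_f_def)
  show "embed_f m a \<tau> x \<in> grid m a" if x: "x \<in> grid m a" for x
  proof -
    obtain i j where ij: "x = (i,j)" "i \<in> {1..m}" "j \<in> {1..a}" using x by (auto simp: grid_def)
    have "\<tau> i \<in> {1..m}" by (rule bij_betw_apply[OF b ij(2)])
    hence "(\<tau> i, j) \<in> grid m a" using ij by (simp add: grid_def)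
    thus ?thesis using ij x by (simp add: embed_f_def)
  qed
  show "inj_on (embed_f m a \<tau>) (grid m a)"
  proof (rule inj_onI)
    fix x y assume "x \<in> grid m a" "y \<in> grid m a" "embed_f m a \<tau> x = embed_f m a \<tau> y"
    then obtain i j i' j' where xy: "x = (i,j)" "y = (i',j')" "i \<in> {1..m}" "i' \<in> {1..m}"
      "\<tau> i = \<tau> i'" "j = j'" by (auto simp: grid_def embed_f_def)
    have "i = i'" using inj_onD[OF bij_betw_imp_inj_on[OF b] xy(5) xy(3) xy(4)] .
    thus "x = y" using xy by simp
  qed
qed

lemma embed_g_Bij:
  assumes "\<sigma> \<in> Bij {1..a}" shows "embed_g m a \<sigma> \<in> Bij (grid m a)"
proof (rule Bij_intro[OF finite_grid])
  have b: "bij_betw \<sigma> {1..a} {1..a}" using assms by (simp add: Bij_def)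
  show "embed_g m a \<sigma> \<in> extensional (grid m a)" by (simp add: embed_g_def)
  show "embed_g m a \<sigma> x \<in> grid m a" if x: "x \<in> grid m a" for x
  proof -
    obtain i j where ij: "x = (i,j)" "i \<in> {1..m}" "j \<in> {1..a}" using x by (auto simp: grid_def)
    have "\<sigma> j \<in> {1..a}" by (rule bij_betw_apply[OF b ij(3)])
    hence "(i, \<sigma> j) \<in> grid m a" using ij by (simp add: grid_def)
    thus ?thesis using ij x by (simp add: embed_g_def)
  qed
  show "inj_on (embed_g m a \<sigma>) (grid m a)"
  proof (rule inj_onI)
    fix x y assume "x \<in> grid m a" "y \<in> grid m a" "embed_g m a \<sigma> x = embed_g m a \<sigma> y"
    then obtain i j i' j' where xy: "x = (i,j)" "y = (i',j')" "j \<in> {1..a}" "j' \<in> {1..a}"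
      "\<sigma> j = \<sigma> j'" "i = i'" by (auto simp: grid_def embed_g_def)
    have "j = j'" using inj_onD[OF bij_betw_imp_inj_on[OF b] xy(5) xy(3) xy(4)] .
    thus "x = y" using xy by simp
  qed
qed

lemma embed_h2_Bij:
  assumes "e \<in> {1..a} \<rightarrow>\<^sub>E {0,1}" shows "embed_h2 a e \<in> Bij (grid 2 a)"
proof (rule Bij_intro[OF finite_grid])
  show "embed_h2 a e \<in> extensional (grid 2 a)" by (simp add: embed_h2_def)
  show "\<And>x. x \<in> grid 2 a \<Longrightarrow> embed_h2 a e x \<in> grid 2 a"
    by (auto simp: embed_h2_def grid_def)
  show "inj_on (embed_h2 a e) (grid 2 a)"
    by (auto simp: embed_h2_def grid_def inj_on_def split: if_splits)
qed

lemma embed_f_hom: "embed_f m a \<in> hom (BijGroup {1..m}) (BijGroup (grid m a))"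
proof (rule homI)
  fix x assume "x \<in> carrier (BijGroup {1..m})"
  thus "embed_f m a x \<in> carrier (BijGroup (grid m a))"
    by (simp add: carrier_Bij embed_f_Bij)
next
  fix x y assume x: "x \<in> carrier (BijGroup {1..m})" and y: "y \<in> carrier (BijGroup {1..m})"
  have yf: "y \<in> {1..m} \<rightarrow> {1..m}" using y by (simp add: carrier_Bij Bij_imp_funcset)
  show "embed_f m a (x \<otimes>\<^bsub>BijGroup {1..m}\<^esub> y) =
        embed_f m a x \<otimes>\<^bsub>BijGroup (grid m a)\<^esub> embed_f m a y"
  proof -
    have xy: "x \<otimes>\<^bsub>BijGroup {1..m}\<^esub> y = compose {1..m} x y"
      using x y by (simp add: carrier_Bij mult_Bij)
    have "embed_f m a x \<otimes>\<^bsub>BijGroup (grid m a)\<^esub> embed_f m a y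
       = compose (grid m a) (embed_f m a x) (embed_f m a y)"
      using x y by (simp add: carrier_Bij mult_Bij embed_f_Bij)
    also have "... = embed_f m a (compose {1..m} x y)"
      using yf by (auto simp: compose_def embed_f_def grid_def intro!: restrict_ext)
    finally show ?thesis using xy by simp
  qed
qed

lemma im_f_subgroup: "subgroup (im_f m a) (BijGroup (grid m a))"
proof -
  interpret group_hom "BijGroup {1..m}" "BijGroup (grid m a)" "embed_f m a"
    by (intro group_hom.intro group_hom_axioms.intro group_BijGroup embed_f_hom)
  show ?thesis unfolding im_f_def by (rule img_is_subgroup)
qed

lemma (in group) norm_comm:
  assumes H: "H \<subseteq> carrier G" and x: "x \<in> carrier G" and c: "\<And>y. y \<in> H \<Longrightarrow> x \<otimes> y = y \<otimes> x"
  shows "x \<in> normalizer G H"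
proof -
  have "x <# H = H #> x" using c unfolding l_coset_def r_coset_def by auto
  hence "x <# H #> inv x = H #> (x \<otimes> inv x)" using H x by (simp add: coset_mult_assoc)
  also have "... = H" using H x by simp
  finally show ?thesis using H x unfolding normalizer_def stabilizer_def by auto
qed

lemma (in group) sub_norm:
  assumes H: "subgroup H G" and x: "x \<in> H"
  shows "x \<in> normalizer G H"
proof -
  have xc: "x \<in> carrier G" by (rule subgroup.mem_carrier[OF H x])
  have e1: "x <# H = H" by (rule coset_join3[OF xc H x])
  have e2: "H #> inv x = H" by (rule coset_join2[OF inv_closed[OF xc] H subgroup.m_inv_closed[OF H x]])
  have "x <# H #> inv x = H" unfolding e1 e2 ..
  moreover have "H \<subseteq> carrier G" by (rule subgroup.subset[OF H])
  ultimately show ?thesis using xc unfolding normalizer_def stabilizer_def by simp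
qed

lemma (in group) norm_conj:
  assumes H: "H \<subseteq> carrier G" and x: "x \<in> normalizer G H" and y: "y \<in> H"
  shows "\<exists>y'\<in>H. x \<otimes> y = y' \<otimes> x"
proof -
  have xc: "x \<in> carrier G" and e: "x <# H #> inv x = H"
    using x H unfolding normalizer_def stabilizer_def by auto
  have yc: "y \<in> carrier G" using H y by auto
  have "x \<otimes> y \<otimes> inv x \<in> x <# H #> inv x" using y unfolding l_coset_def r_coset_def by auto
  hence m: "x \<otimes> y \<otimes> inv x \<in> H" using e by simp
  have "x \<otimes> y = (x \<otimes> y \<otimes> inv x) \<otimes> x" using xc yc by (simp add: m_assoc)
  thus ?thesis using m by blast
qed

lemma bij2_cases:
  assumes "\<tau> \<in> Bij {1..(2::nat)}"
  shows "(\<tau> 1 = 1 \<and> \<tau> 2 = 2) \<or> (\<tau> 1 = 2 \<and> \<tau> 2 = 1)"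
proof -
  have b: "bij_betw \<tau> {1..2} {1..2}" using assms by (simp add: Bij_def)
  have "\<tau> 1 \<in> {1..2}" "\<tau> 2 \<in> {1..2}" using b by (auto simp: bij_betw_def)
  moreover have "\<tau> 1 \<noteq> \<tau> 2"
  proof
    assume "\<tau> 1 = \<tau> 2"
    hence "(1::nat) = 2" using b inj_onD[of \<tau> "{1..2}" 1 2] by (auto simp: bij_betw_def)
    thus False by simp
  qed
  ultimately show ?thesis by auto
qed

lemma g_comm_f:
  assumes s: "\<sigma> \<in> Bij {1..a}" and t: "\<tau> \<in> Bij {1..m}"
  shows "embed_g m a \<sigma> \<otimes>\<^bsub>BijGroup (grid m a)\<^esub> embed_f m a \<tau>
       = embed_f m a \<tau> \<otimes>\<^bsub>BijGroup (grid m a)\<^esub> embed_g m a \<sigma>"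
proof -
  have sf: "\<sigma> \<in> {1..a} \<rightarrow> {1..a}" using s by (simp add: Bij_imp_funcset)
  have tf: "\<tau> \<in> {1..m} \<rightarrow> {1..m}" using t by (simp add: Bij_imp_funcset)
  have "compose (grid m a) (embed_g m a \<sigma>) (embed_f m a \<tau>)
      = compose (grid m a) (embed_f m a \<tau>) (embed_g m a \<sigma>)"
    unfolding compose_def
  proof (rule restrict_ext)
    fix x assume "x \<in> grid m a"
    then obtain i j where x: "x = (i,j)" "i \<in> {1..m}" "j \<in> {1..a}" by (auto simp: grid_def)
    have "\<tau> i \<in> {1..m}" "\<sigma> j \<in> {1..a}" using x sf tf by auto
    hence g: "(i,j) \<in> grid m a" "(\<tau> i, j) \<in> grid m a" "(i, \<sigma> j) \<in> grid m a"
      using x by (auto simp: grid_def)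
    show "embed_g m a \<sigma> (embed_f m a \<tau> x) = embed_f m a \<tau> (embed_g m a \<sigma> x)"
      using x(1) g by (simp add: embed_f_def embed_g_def)
  qed
  thus ?thesis unfolding mult_Bij[OF embed_g_Bij[OF s] embed_f_Bij[OF t]]
     mult_Bij[OF embed_f_Bij[OF t] embed_g_Bij[OF s]] .
qed

lemma h_comm_f:
  assumes e: "e \<in> {1..a} \<rightarrow>\<^sub>E {0,1}" and t: "\<tau> \<in> Bij {1..2}"
  shows "embed_h2 a e \<otimes>\<^bsub>BijGroup (grid 2 a)\<^esub> embed_f 2 a \<tau>
       = embed_f 2 a \<tau> \<otimes>\<^bsub>BijGroup (grid 2 a)\<^esub> embed_h2 a e"
proof -
  have tf: "\<tau> \<in> {1..2} \<rightarrow> {1..2}" using t by (simp add: Bij_imp_funcset)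
  have c: "(\<tau> 1 = 1 \<and> \<tau> 2 = 2) \<or> (\<tau> 1 = 2 \<and> \<tau> 2 = 1)" using bij2_cases[OF t] .
  have "compose (grid 2 a) (embed_h2 a e) (embed_f 2 a \<tau>)
      = compose (grid 2 a) (embed_f 2 a \<tau>) (embed_h2 a e)"
    unfolding compose_def
  proof (rule restrict_ext)
    fix x assume "x \<in> grid 2 a"
    then obtain i j where x: "x = (i,j)" "i \<in> {1..2}" "j \<in> {1..a}" by (auto simp: grid_def)
    have ti: "\<tau> i \<in> {1..2}" using tf x(2) by auto
    have i12: "i = 1 \<or> i = 2" using x(2) by auto
    have t3: "\<tau> (3 - i) = 3 - \<tau> i" using i12 c by (auto simp: numeral_eq_Suc)
    have i3: "3 - i \<in> {1..2}" using x(2) by auto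
    have g1: "(i,j) \<in> grid 2 a" "(\<tau> i, j) \<in> grid 2 a" "(3 - i, j) \<in> grid 2 a"
      using x ti i3 by (auto simp: grid_def)
    have l: "embed_h2 a e (embed_f 2 a \<tau> x) = (if e j = 1 then 3 - \<tau> i else \<tau> i, j)"
      using g1 x(1) by (simp add: embed_f_def embed_h2_def)
    have r: "embed_f 2 a \<tau> (embed_h2 a e x) = (if e j = 1 then \<tau> (3 - i) else \<tau> i, j)"
      using g1 x(1) by (simp add: embed_f_def embed_h2_def)
    show "embed_h2 a e (embed_f 2 a \<tau> x) = embed_f 2 a \<tau> (embed_h2 a e x)"
      unfolding l r t3 by simp
  qed
  thus ?thesis unfolding mult_Bij[OF embed_h2_Bij[OF e] embed_f_Bij[OF t]]
     mult_Bij[OF embed_f_Bij[OF t] embed_h2_Bij[OF e]] .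
qed

lemma im_f_sub: "im_f m a \<subseteq> carrier (BijGroup (grid m a))"
  using im_f_subgroup subgroup.subset by blast

lemma supset:
  assumes "m \<ge> 2"
  shows "im_h m a <#>\<^bsub>BijGroup (grid m a)\<^esub> im_g m a \<subseteq> normalizer (BijGroup (grid m a)) (im_f m a)"
proof -
  interpret group "BijGroup (grid m a)" by (rule group_BijGroup)
  let ?N = "normalizer (BijGroup (grid m a)) (im_f m a)"
  have N: "subgroup ?N (BijGroup (grid m a))" by (rule normalizer_imp_subgroup[OF im_f_sub])
  have G: "im_g m a \<subseteq> ?N"
  proof
    fix x assume "x \<in> im_g m a"
    then obtain \<sigma> where s: "\<sigma> \<in> Bij {1..a}" and x: "x = embed_g m a \<sigma>"
      by (auto simp: im_g_def carrier_Bij)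
    show "x \<in> ?N" unfolding x
    proof (rule norm_comm[OF im_f_sub])
      show "embed_g m a \<sigma> \<in> carrier (BijGroup (grid m a))" using s by (simp add: carrier_Bij embed_g_Bij)
      fix y assume "y \<in> im_f m a"
      then obtain \<tau> where t: "\<tau> \<in> Bij {1..m}" and y: "y = embed_f m a \<tau>"
        by (auto simp: im_f_def carrier_Bij)
      show "embed_g m a \<sigma> \<otimes>\<^bsub>BijGroup (grid m a)\<^esub> y = y \<otimes>\<^bsub>BijGroup (grid m a)\<^esub> embed_g m a \<sigma>"
        unfolding y by (rule g_comm_f[OF s t])
    qed
  qed
  have H: "im_h m a \<subseteq> ?N"
  proof (cases "m = 2")
    case True
    show ?thesis
    proof
      fix x assume "x \<in> im_h m a"
      then obtain e where e: "e \<in> {1..a} \<rightarrow>\<^sub>E {0,1}" and x: "x = embed_h2 a e"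
        using True by (auto simp: im_h_def)
      show "x \<in> ?N" unfolding x
      proof (rule norm_comm[OF im_f_sub])
        show "embed_h2 a e \<in> carrier (BijGroup (grid m a))" using e True by (simp add: carrier_Bij embed_h2_Bij)
        fix y assume "y \<in> im_f m a"
        then obtain \<tau> where t: "\<tau> \<in> Bij {1..2}" and y: "y = embed_f 2 a \<tau>"
          using True by (auto simp: im_f_def carrier_Bij)
        show "embed_h2 a e \<otimes>\<^bsub>BijGroup (grid m a)\<^esub> y = y \<otimes>\<^bsub>BijGroup (grid m a)\<^esub> embed_h2 a e"
          unfolding y True by (rule h_comm_f[OF e t])
      qed
    qed
  next
    case False
    thus ?thesis using sub_norm[OF im_f_subgroup] by (auto simp: im_h_def)
  qed
  show ?thesis
    using G H subgroup.m_closed[OF N] unfolding set_mult_def by blast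
qed

definition tr :: "nat \<Rightarrow> nat \<Rightarrow> nat \<Rightarrow> nat \<Rightarrow> nat" where
  "tr m i l = (\<lambda>x\<in>{1..m}. if x = i then l else if x = l then i else x)"

lemma tr_Bij: assumes "i \<in> {1..m}" "l \<in> {1..m}" shows "tr m i l \<in> Bij {1..m}"
proof (rule Bij_intro)
  show "tr m i l \<in> extensional {1..m}" by (simp add: tr_def)
  show "\<And>x. x \<in> {1..m} \<Longrightarrow> tr m i l x \<in> {1..m}" using assms by (auto simp: tr_def)
  show "inj_on (tr m i l) {1..m}" using assms by (auto simp: tr_def inj_on_def)
qed simp

lemma fst_fix: "u = (h0 (fst u), w) \<Longrightarrow> fst u = h0 (fst u)"
  by (metis fst_conv)

lemma main_sub:
  fixes \<pi> :: "nat \<times> nat \<Rightarrow> nat \<times> nat"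
  assumes m2: "m \<ge> 2" and a1: "a \<ge> 1"
    and \<pi>B: "\<pi> \<in> Bij (grid m a)"
    and K: "\<And>\<tau>. \<tau> \<in> Bij {1..m} \<Longrightarrow> \<exists>\<tau>'\<in>Bij {1..m}. \<forall>i\<in>{1..m}. \<forall>j\<in>{1..a}.
               \<pi> (\<tau> i, j) = (\<tau>' (fst (\<pi> (i,j))), snd (\<pi> (i,j)))"
  shows "\<pi> \<in> im_h m a <#>\<^bsub>BijGroup (grid m a)\<^esub> im_g m a"
proof -
  let ?G = "grid m a"
  have bb: "bij_betw \<pi> ?G ?G" using \<pi>B by (simp add: Bij_def)
  have gm: "(i,j) \<in> ?G" if "i \<in> {1..m}" "j \<in> {1..a}" for i j
    using that by (simp add: grid_def)
  have inG: "\<pi> (i,j) \<in> ?G" if "i \<in> {1..m}" "j \<in> {1..a}" for i j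
    by (rule bij_betw_apply[OF bb gm[OF that]])
  have inj: "i = i' \<and> j = j'" if "i \<in> {1..m}" "j \<in> {1..a}" "i' \<in> {1..m}" "j' \<in> {1..a}"
      "\<pi> (i,j) = \<pi> (i',j')" for i j i' j'
  proof -
    have "(i,j) = (i',j')"
      by (rule inj_onD[OF bij_betw_imp_inj_on[OF bb] that(5) gm[OF that(1,2)] gm[OF that(3,4)]])
    thus ?thesis by simp
  qed
  have surj: "\<exists>i j. i \<in> {1..m} \<and> j \<in> {1..a} \<and> \<pi> (i,j) = p" if p: "p \<in> ?G" for p
  proof -
    have "p \<in> \<pi> ` ?G" using bb p by (simp add: bij_betw_def)
    then obtain q where q: "q \<in> ?G" "p = \<pi> q" by (elim imageE)
    obtain i j where qq: "q = (i,j)" by (cases q)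
    have "i \<in> {1..m}" "j \<in> {1..a}" using q(1) unfolding qq grid_def by auto
    thus ?thesis using q(2) qq by blast
  qed
  have S1: "snd (\<pi> (i',j)) = snd (\<pi> (i,j))" if "i \<in> {1..m}" "i' \<in> {1..m}" "j \<in> {1..a}" for i i' j
  proof -
    from K[OF tr_Bij[OF that(1,2)]] obtain \<tau>' where "\<tau>' \<in> Bij {1..m}" and e: "\<forall>i0\<in>{1..m}. \<forall>j0\<in>{1..a}.
               \<pi> (tr m i i' i0, j0) = (\<tau>' (fst (\<pi> (i0,j0))), snd (\<pi> (i0,j0)))" ..
    have e1: "\<pi> (tr m i i' i, j) = (\<tau>' (fst (\<pi> (i,j))), snd (\<pi> (i,j)))"
      using bspec[OF bspec[OF e that(1)] that(3)] .
    have "tr m i i' i = i'" using that by (simp add: tr_def)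
    hence "\<pi> (i', j) = (\<tau>' (fst (\<pi> (i,j))), snd (\<pi> (i,j)))" using e1 by simp
    thus ?thesis by simp
  qed
  have one: "(1::nat) \<in> {1..m}" using m2 by simp
  have a1': "(1::nat) \<in> {1..a}" using a1 by simp
  define \<sigma> where "\<sigma> = (\<lambda>j\<in>{1..a}. snd (\<pi> (1,j)))"
  define \<rho> where "\<rho> j i = fst (\<pi> (i,j))" for j i
  have rep: "\<pi> (i,j) = (\<rho> j i, \<sigma> j)" if "i \<in> {1..m}" "j \<in> {1..a}" for i j
  proof -
    have "snd (\<pi> (i,j)) = \<sigma> j" using S1[OF one that(1) that(2)] that(2) by (simp add: \<sigma>_def)
    moreover have "fst (\<pi> (i,j)) = \<rho> j i" by (simp add: \<rho>_def)
    ultimately show ?thesis by (metis prod.collapse)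
  qed
  have \<rho>\<sigma>r: "\<rho> j i \<in> {1..m} \<and> \<sigma> j \<in> {1..a}" if "i \<in> {1..m}" "j \<in> {1..a}" for i j
  proof -
    have "(\<rho> j i, \<sigma> j) \<in> ?G" using inG[OF that] unfolding rep[OF that] .
    thus ?thesis by (simp add: grid_def)
  qed
  have \<rho>r: "\<rho> j i \<in> {1..m}" if "i \<in> {1..m}" "j \<in> {1..a}" for i j using \<rho>\<sigma>r[OF that] by simp
  have \<sigma>r': "\<sigma> j \<in> {1..a}" if "j \<in> {1..a}" for j using \<rho>\<sigma>r[OF one that] by simp
  have \<sigma>B: "\<sigma> \<in> Bij {1..a}"
  proof (rule Bij_intro)
    show "\<sigma> \<in> extensional {1..a}" by (simp add: \<sigma>_def)
    show "\<And>x. x \<in> {1..a} \<Longrightarrow> \<sigma> x \<in> {1..a}" by (rule \<sigma>r')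
    show "inj_on \<sigma> {1..a}"
    proof (rule finite_surj_inj)
      show "{1..a} \<subseteq> \<sigma> ` {1..a}"
      proof
        fix k assume k: "k \<in> {1..a}"
        have "(1,k) \<in> ?G" by (rule gm[OF one k])
        from surj[OF this] obtain i j where ij: "i \<in> {1..m}" "j \<in> {1..a}" "\<pi> (i,j) = (1,k)" by blast
        have "(\<rho> j i, \<sigma> j) = (1,k)" using ij(3) unfolding rep[OF ij(1,2)] .
        hence "k = \<sigma> j" by simp
        thus "k \<in> \<sigma> ` {1..a}" using ij(2) by (rule image_eqI)
      qed
    qed simp
  qed simp
  have \<rho>inj: "inj_on (\<rho> j) {1..m}" if j: "j \<in> {1..a}" for j
  proof (rule inj_onI)
    fix i i' assume ii: "i \<in> {1..m}" "i' \<in> {1..m}" "\<rho> j i = \<rho> j i'"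
    have "\<pi> (i,j) = \<pi> (i',j)" unfolding rep[OF ii(1) j] rep[OF ii(2) j] ii(3) ..
    thus "i = i'" using inj[OF ii(1) j ii(2) j] by simp
  qed
  have \<rho>surj: "\<rho> j ` {1..m} = {1..m}" if j: "j \<in> {1..a}" for j
  proof (rule endo_inj_surj[OF _ _ \<rho>inj[OF j]])
    show "\<rho> j ` {1..m} \<subseteq> {1..m}" using \<rho>r[OF _ j] by blast
  qed simp
  show ?thesis
  proof (cases "m = 2")
    case False
    hence m3: "m \<ge> 3" using m2 by simp
    have L: "\<rho> j i = \<rho> 1 i \<or> \<rho> j i = \<rho> 1 l"
      if i: "i \<in> {1..m}" and l: "l \<in> {1..m}" and il: "i \<noteq> l" and j: "j \<in> {1..a}" for i l j
    proof -
      from K[OF tr_Bij[OF i l]] obtain \<tau>' where "\<tau>' \<in> Bij {1..m}" and e: "\<forall>i0\<in>{1..m}. \<forall>j0\<in>{1..a}.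
               \<pi> (tr m i l i0, j0) = (\<tau>' (fst (\<pi> (i0,j0))), snd (\<pi> (i0,j0)))" ..
      have fix1: "\<tau>' (\<rho> 1 k) = \<rho> 1 k" if k: "k \<in> {1..m}" "k \<noteq> i" "k \<noteq> l" for k
      proof -
        have e1: "\<pi> (tr m i l k, 1) = (\<tau>' (fst (\<pi> (k,1))), snd (\<pi> (k,1)))"
          using bspec[OF bspec[OF e k(1)] a1'] .
        have "tr m i l k = k" using k by (simp add: tr_def)
        hence "\<pi> (k, 1) = (\<tau>' (fst (\<pi> (k,1))), snd (\<pi> (k,1)))" using e1 by simp
        hence "fst (\<pi> (k, 1)) = \<tau>' (fst (\<pi> (k,1)))" by (rule fst_fix)
        thus ?thesis unfolding \<rho>_def by simp
      qed
      have mv: "\<tau>' (\<rho> j i) = \<rho> j l"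
      proof -
        have e1: "\<pi> (tr m i l i, j) = (\<tau>' (fst (\<pi> (i,j))), snd (\<pi> (i,j)))"
          using bspec[OF bspec[OF e i] j] .
        have "tr m i l i = l" using i by (simp add: tr_def)
        hence "\<pi> (l, j) = (\<tau>' (fst (\<pi> (i,j))), snd (\<pi> (i,j)))" using e1 by simp
        hence "fst (\<pi> (l, j)) = \<tau>' (fst (\<pi> (i,j)))" by simp
        thus ?thesis unfolding \<rho>_def by simp
      qed
      have ne: "\<rho> j l \<noteq> \<rho> j i"
      proof
        assume "\<rho> j l = \<rho> j i"
        hence "l = i" using inj_onD[OF \<rho>inj[OF j] _ l i] by blast
        thus False using il by simp
      qed
      have "\<rho> j i \<in> \<rho> 1 ` {1..m}" using \<rho>r[OF i j] unfolding \<rho>surj[OF a1'] .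
      then obtain k where k: "k \<in> {1..m}" "\<rho> j i = \<rho> 1 k" by (elim imageE) simp
      show ?thesis
      proof (cases "k = i \<or> k = l")
        case True thus ?thesis using k by auto
      next
        case False
        hence "\<tau>' (\<rho> 1 k) = \<rho> 1 k" using fix1 k(1) by blast
        hence "\<tau>' (\<rho> j i) = \<rho> j i" unfolding k(2) .
        hence False using mv ne by simp
        thus ?thesis ..
      qed
    qed
    have C: "\<rho> j i = \<rho> 1 i" if i: "i \<in> {1..m}" and j: "j \<in> {1..a}" for i j
    proof -
      obtain l l' where ll: "l \<in> {1..m}" "l' \<in> {1..m}" "l \<noteq> i" "l' \<noteq> i" "l \<noteq> l'"
      proof (cases "i = 1")
        case True thus ?thesis using that[of 2 3] m3 by auto
      next
        case False
        show ?thesis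
        proof (cases "i = 2")
          case True thus ?thesis using that[of 1 3] m3 by auto
        next
          case False thus ?thesis using that[of 1 2] m3 \<open>i \<noteq> 1\<close> by auto
        qed
      qed
      have n: "\<rho> 1 l \<noteq> \<rho> 1 l'"
      proof
        assume "\<rho> 1 l = \<rho> 1 l'"
        hence "l = l'" using inj_onD[OF \<rho>inj[OF a1'] _ ll(1) ll(2)] by blast
        thus False using ll(5) by simp
      qed
      have A1: "\<rho> j i = \<rho> 1 i \<or> \<rho> j i = \<rho> 1 l" using L[OF i ll(1) _ j] ll(3) by metis
      have A2: "\<rho> j i = \<rho> 1 i \<or> \<rho> j i = \<rho> 1 l'" using L[OF i ll(2) _ j] ll(4) by metis
      show ?thesis using A1 A2 n by metis
    qed
    define r where "r = restrict (\<rho> 1) {1..m}"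
    have rB: "r \<in> Bij {1..m}"
    proof (rule Bij_intro)
      show "r \<in> extensional {1..m}" by (simp add: r_def)
      show "r x \<in> {1..m}" if "x \<in> {1..m}" for x using \<rho>r[OF that a1'] that by (simp add: r_def)
      have "inj_on r {1..m} = inj_on (\<rho> 1) {1..m}" by (rule inj_on_cong) (simp add: r_def)
      thus "inj_on r {1..m}" using \<rho>inj[OF a1'] by simp
    qed simp
    have fB: "embed_f m a r \<in> Bij ?G" by (rule embed_f_Bij[OF rB])
    have gB: "embed_g m a \<sigma> \<in> Bij ?G" by (rule embed_g_Bij[OF \<sigma>B])
    have eq: "\<pi> = embed_f m a r \<otimes>\<^bsub>BijGroup ?G\<^esub> embed_g m a \<sigma>"
      unfolding mult_Bij[OF fB gB]
    proof (rule extensionalityI)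
      show "\<pi> \<in> extensional ?G" using \<pi>B by (simp add: Bij_def)
      show "compose ?G (embed_f m a r) (embed_g m a \<sigma>) \<in> extensional ?G" by (simp add: compose_def)
      fix x assume xG: "x \<in> ?G"
      obtain i j where x: "x = (i,j)" by (cases x)
      have ij: "i \<in> {1..m}" "j \<in> {1..a}" using xG unfolding x grid_def by auto
      have g2: "(i, \<sigma> j) \<in> ?G" by (rule gm[OF ij(1) \<sigma>r'[OF ij(2)]])
      have c1: "compose ?G (embed_f m a r) (embed_g m a \<sigma>) (i,j) = embed_f m a r (embed_g m a \<sigma> (i,j))"
        using xG unfolding x by (simp add: compose_def)
      have c2: "embed_g m a \<sigma> (i,j) = (i, \<sigma> j)" using gm[OF ij] by (simp add: embed_g_def)
      have c3: "embed_f m a r (i, \<sigma> j) = (r i, \<sigma> j)" using g2 by (simp add: embed_f_def)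
      have c4: "r i = \<rho> j i" using C[OF ij] ij(1) by (simp add: r_def)
      show "\<pi> x = compose ?G (embed_f m a r) (embed_g m a \<sigma>) x"
        unfolding x c1 c2 c3 c4 rep[OF ij] ..
    qed
    have "embed_f m a r \<in> im_h m a" using False rB by (simp add: im_h_def im_f_def carrier_Bij)
    moreover have "embed_g m a \<sigma> \<in> im_g m a" using \<sigma>B by (simp add: im_g_def carrier_Bij)
    ultimately show ?thesis using eq unfolding set_mult_def by blast
  next
    case True
    define \<sigma>i where "\<sigma>i = inv_into {1..a} \<sigma>"
    have \<sigma>bb: "bij_betw \<sigma> {1..a} {1..a}" using \<sigma>B by (simp add: Bij_def)
    have \<sigma>i1: "\<sigma>i (\<sigma> j) = j" if "j \<in> {1..a}" for j
      unfolding \<sigma>i_def by (rule inv_into_f_f[OF bij_betw_imp_inj_on[OF \<sigma>bb] that])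
    define e where "e = (\<lambda>k\<in>{1..a}. if \<rho> (\<sigma>i k) 1 = 1 then 0 else (1::nat))"
    have eE: "e \<in> {1..a} \<rightarrow>\<^sub>E {0,1}" by (simp add: e_def)
    have hB: "embed_h2 a e \<in> Bij (grid 2 a)" by (rule embed_h2_Bij[OF eE])
    have gB: "embed_g 2 a \<sigma> \<in> Bij (grid 2 a)" by (rule embed_g_Bij[OF \<sigma>B])
    have two: "\<rho> j i = (if \<rho> j 1 = 1 then i else 3 - i)" if i: "i \<in> {1..2}" and j: "j \<in> {1..a}" for i j
    proof -
      have o1: "(1::nat) \<in> {1..m}" "(2::nat) \<in> {1..m}" using True by auto
      have r12: "\<rho> j 1 \<in> {1..2}" "\<rho> j 2 \<in> {1..2}" using \<rho>r[OF o1(1) j] \<rho>r[OF o1(2) j] True by auto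
      have n12: "\<rho> j 1 \<noteq> \<rho> j 2"
      proof
        assume "\<rho> j 1 = \<rho> j 2"
        hence "(1::nat) = 2" using inj_onD[OF \<rho>inj[OF j] _ o1(1) o1(2)] by blast
        thus False by simp
      qed
      have "i = 1 \<or> i = 2" using i by auto
      thus ?thesis using r12 n12 by auto
    qed
    have eq: "\<pi> = embed_h2 a e \<otimes>\<^bsub>BijGroup (grid 2 a)\<^esub> embed_g 2 a \<sigma>"
      unfolding mult_Bij[OF hB gB]
    proof (rule extensionalityI)
      show "\<pi> \<in> extensional (grid 2 a)" using \<pi>B True by (simp add: Bij_def)
      show "compose (grid 2 a) (embed_h2 a e) (embed_g 2 a \<sigma>) \<in> extensional (grid 2 a)" by (simp add: compose_def)
      fix x assume xG: "x \<in> grid 2 a"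
      obtain i j where x: "x = (i,j)" by (cases x)
      have ij: "i \<in> {1..2}" "j \<in> {1..a}" using xG unfolding x grid_def by auto
      have im: "i \<in> {1..m}" using ij True by simp
      have g1: "(i, j) \<in> grid 2 a" using ij by (simp add: grid_def)
      have g2: "(i, \<sigma> j) \<in> grid 2 a" using ij \<sigma>r'[OF ij(2)] by (simp add: grid_def)
      have c1: "compose (grid 2 a) (embed_h2 a e) (embed_g 2 a \<sigma>) (i,j) = embed_h2 a e (embed_g 2 a \<sigma> (i,j))"
        using xG unfolding x by (simp add: compose_def)
      have c2: "embed_g 2 a \<sigma> (i,j) = (i, \<sigma> j)" using g1 by (simp add: embed_g_def)
      have c3: "embed_h2 a e (i, \<sigma> j) = (if e (\<sigma> j) = 1 then 3 - i else i, \<sigma> j)" using g2 by (simp add: embed_h2_def)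
      have c4: "e (\<sigma> j) = (if \<rho> j 1 = 1 then 0 else 1)"
        using \<sigma>r'[OF ij(2)] \<sigma>i1[OF ij(2)] by (simp add: e_def)
      have c5: "(if e (\<sigma> j) = 1 then 3 - i else i) = \<rho> j i"
        unfolding c4 two[OF ij] by simp
      show "\<pi> x = compose (grid 2 a) (embed_h2 a e) (embed_g 2 a \<sigma>) x"
        unfolding x c1 c2 c3 c5 rep[OF im ij(2)] ..
    qed
    have "embed_h2 a e \<in> im_h m a" using True eE by (simp add: im_h_def)
    moreover have "embed_g 2 a \<sigma> \<in> im_g m a" using \<sigma>B True by (simp add: im_g_def carrier_Bij)
    ultimately show ?thesis using eq True unfolding set_mult_def by blast
  qed
qed

theorem lemma4p3:
  fixes m a :: nat
  assumes "m \<ge> 2" and "a \<ge> 1"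
  shows "normalizer (BijGroup (grid m a)) (im_f m a)
           = im_h m a <#>\<^bsub>BijGroup (grid m a)\<^esub> im_g m a"
proof
  show "im_h m a <#>\<^bsub>BijGroup (grid m a)\<^esub> im_g m a \<subseteq> normalizer (BijGroup (grid m a)) (im_f m a)"
    by (rule supset[OF assms(1)])
next
  interpret group "BijGroup (grid m a)" by (rule group_BijGroup)
  show "normalizer (BijGroup (grid m a)) (im_f m a) \<subseteq> im_h m a <#>\<^bsub>BijGroup (grid m a)\<^esub> im_g m a"
  proof
    fix \<pi> assume pN: "\<pi> \<in> normalizer (BijGroup (grid m a)) (im_f m a)"
    have \<pi>B: "\<pi> \<in> Bij (grid m a)" using pN unfolding normalizer_def stabilizer_def by (simp add: carrier_Bij)
    have bb: "bij_betw \<pi> (grid m a) (grid m a)" using \<pi>B by (simp add: Bij_def)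
    show "\<pi> \<in> im_h m a <#>\<^bsub>BijGroup (grid m a)\<^esub> im_g m a"
    proof (rule main_sub[OF assms \<pi>B])
      fix \<tau> assume t: "\<tau> \<in> Bij {1..m}"
      have "embed_f m a \<tau> \<in> im_f m a" using t by (simp add: im_f_def carrier_Bij)
      then obtain y' where y': "y' \<in> im_f m a"
        and c: "\<pi> \<otimes>\<^bsub>BijGroup (grid m a)\<^esub> embed_f m a \<tau> = y' \<otimes>\<^bsub>BijGroup (grid m a)\<^esub> \<pi>"
        using norm_conj[OF im_f_sub pN] by blast
      then obtain \<tau>' where t': "\<tau>' \<in> Bij {1..m}" and y'e: "y' = embed_f m a \<tau>'"
        by (auto simp: im_f_def carrier_Bij)
      have c2: "compose (grid m a) \<pi> (embed_f m a \<tau>) = compose (grid m a) (embed_f m a \<tau>') \<pi>"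
        using c unfolding y'e mult_Bij[OF \<pi>B embed_f_Bij[OF t]] mult_Bij[OF embed_f_Bij[OF t'] \<pi>B] .
      have tf: "\<tau> \<in> {1..m} \<rightarrow> {1..m}" using t by (simp add: Bij_imp_funcset)
      show "\<exists>\<tau>'\<in>Bij {1..m}. \<forall>i\<in>{1..m}. \<forall>j\<in>{1..a}.
               \<pi> (\<tau> i, j) = (\<tau>' (fst (\<pi> (i,j))), snd (\<pi> (i,j)))"
      proof (intro bexI[OF _ t'] ballI)
        fix i j assume i: "i \<in> {1..m}" and j: "j \<in> {1..a}"
        have ij: "(i,j) \<in> grid m a" using i j by (simp add: grid_def)
        have pin: "\<pi> (i,j) \<in> grid m a" using bb ij by (auto simp: bij_betw_def)
        have "compose (grid m a) \<pi> (embed_f m a \<tau>) (i,j) = compose (grid m a) (embed_f m a \<tau>') \<pi> (i,j)"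
          using c2 by simp
        moreover have "compose (grid m a) \<pi> (embed_f m a \<tau>) (i,j) = \<pi> (\<tau> i, j)"
          using ij by (simp add: compose_def embed_f_def)
        moreover have "compose (grid m a) (embed_f m a \<tau>') \<pi> (i,j) = embed_f m a \<tau>' (\<pi> (i,j))"
          using ij by (simp add: compose_def)
        moreover have "embed_f m a \<tau>' (\<pi> (i,j)) = (\<tau>' (fst (\<pi> (i,j))), snd (\<pi> (i,j)))"
        proof -
          obtain u v where uv: "\<pi> (i,j) = (u,v)" by (cases "\<pi> (i,j)")
          show ?thesis using pin unfolding uv by (simp add: embed_f_def)
        qed
        ultimately show "\<pi> (\<tau> i, j) = (\<tau>' (fst (\<pi> (i,j))), snd (\<pi> (i,j)))"
          by simp
      qed
    qed
  qed
qed

end
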